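(* Let $n\ge2$, $c>0$, and $d\mu=e^{c|x|^2}dx$ on $\mathbb R^n$, with $\|g\|_2^2=\int_{\mathbb R^n}|g|^2\,d\mu$. Then $$\inf\Big\{\frac{\|\nabla u\|_2^2}{\|u\|_2^2}: u\in C_0^\infty(\mathbb R^n),\ u\ne0\Big\}=2cn=\frac{\|\nabla(e^{-c|x|^2})\|_2^2}{\|e^{-c|x|^2}\|_2^2}.$$ *)

theory Defs
  imports "HOL-Analysis.Analysis"
begin

fun Ck :: "nat \<Rightarrow> ('a::euclidean_space \<Rightarrow> real) \<Rightarrow> bool" where
  "Ck 0 f = continuous_on UNIV f"
| "Ck (Suc k) f = (f differentiable_on UNIV \<and>
      (\<forall>v. Ck k (\<lambda>x. frechet_derivative f (at x) v)))"

definition C_inf :: "('a::euclidean_space \<Rightarrow> real) \<Rightarrow> bool" where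
  "C_inf f = (\<forall>k. Ck k f)"

definition C0_inf :: "('a::euclidean_space \<Rightarrow> real) \<Rightarrow> bool" where
  "C0_inf f = (C_inf f \<and> compact (closure {x. f x \<noteq> 0}))"

definition grad :: "('a::euclidean_space \<Rightarrow> real) \<Rightarrow> 'a \<Rightarrow> 'a" where
  "grad u x = (\<Sum>i\<in>Basis. frechet_derivative u (at x) i *\<^sub>R i)"

definition gmu :: "real \<Rightarrow> 'a::euclidean_space measure" where
  "gmu c = density lborel (\<lambda>x. ennreal (exp (c * norm x ^ 2)))"

definition L2sq :: "real \<Rightarrow> ('a::euclidean_space \<Rightarrow> 'b::real_normed_vector) \<Rightarrow> real" where
  "L2sq c g = integral\<^sup>L (gmu c) (\<lambda>x. norm (g x) ^ 2)"

end

theory Submission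
  imports Defs "HOL-Probability.Probability" "HOL-Computational_Algebra.Polynomial"
begin


lemma fd_eq: "(f has_derivative f') (at x) \<Longrightarrow> frechet_derivative f (at x) = f'"
  using frechet_derivative_at by metis

lemma Ck_mono: "Ck (Suc k) f \<Longrightarrow> Ck k f"
proof (induction k arbitrary: f)
  case 0 then show ?case by (simp add: differentiable_imp_continuous_on)
next
  case (Suc k) then show ?case by simp
qed

lemma Ck_mono_add: "Ck (k + d) f \<Longrightarrow> Ck k f"
proof (induction d)
  case 0 then show ?case by simp
next
  case (Suc d)
  have "Ck (Suc (k + d)) f" using Suc.prems by simp
  then show ?case using Suc.IH Ck_mono by blast
qed

lemma Ck_mono_le: "k \<le> m \<Longrightarrow> Ck m f \<Longrightarrow> Ck k f"
  using Ck_mono_add[of k "m - k" f] by simp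

lemma Ck_SucI:
  assumes "\<And>x. (f has_derivative D x) (at x)" "\<And>v. Ck k (\<lambda>x. D x v)"
  shows "Ck (Suc k) f"
proof -
  have "f differentiable_on UNIV" using assms(1) unfolding differentiable_on_def differentiable_def by blast
  moreover have "(\<lambda>x. frechet_derivative f (at x) v) = (\<lambda>x. D x v)" for v
    using fd_eq[OF assms(1)] by auto
  ultimately show ?thesis using assms(2) by simp
qed

lemma Ck_SucD:
  assumes "Ck (Suc k) f"
  shows "(f has_derivative frechet_derivative f (at x)) (at x)"
    "\<And>v. Ck k (\<lambda>x. frechet_derivative f (at x) v)"
proof -
  have "f differentiable (at x)" using assms by (simp add: differentiable_on_def)
  then show "(f has_derivative frechet_derivative f (at x)) (at x)" using frechet_derivative_works by blast
  show "\<And>v. Ck k (\<lambda>x. frechet_derivative f (at x) v)" using assms by simp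
qed

lemma Ck_const: "Ck k (\<lambda>x. b)"
proof (induction k arbitrary: b)
  case 0 then show ?case by simp
next
  case (Suc k)
  show ?case by (rule Ck_SucI[where D="\<lambda>x v. 0"]) (auto intro: Suc)
qed

lemma Ck_add: "Ck k f \<Longrightarrow> Ck k g \<Longrightarrow> Ck k (\<lambda>x. f x + g x)"
proof (induction k arbitrary: f g)
  case 0 then show ?case by (simp add: continuous_on_add)
next
  case (Suc k)
  show ?case
    apply (rule Ck_SucI[where D="\<lambda>x v. frechet_derivative f (at x) v + frechet_derivative g (at x) v"])
     apply (rule has_derivative_add[OF Ck_SucD(1)[OF Suc.prems(1)] Ck_SucD(1)[OF Suc.prems(2)]])
    apply (rule Suc.IH[OF Ck_SucD(2)[OF Suc.prems(1)] Ck_SucD(2)[OF Suc.prems(2)]])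
    done
qed

lemma Ck_mult: "Ck k f \<Longrightarrow> Ck k g \<Longrightarrow> Ck k (\<lambda>x. f x * g x)"
proof (induction k arbitrary: f g)
  case 0 then show ?case by (simp add: continuous_on_mult)
next
  case (Suc k)
  show ?case
    apply (rule Ck_SucI[where D="\<lambda>x v. f x * frechet_derivative g (at x) v + frechet_derivative f (at x) v * g x"])
     apply (rule has_derivative_mult[OF Ck_SucD(1)[OF Suc.prems(1)] Ck_SucD(1)[OF Suc.prems(2)]])
    apply (rule Ck_add)
     apply (rule Suc.IH[OF Ck_mono[OF Suc.prems(1)] Ck_SucD(2)[OF Suc.prems(2)]])
    apply (rule Suc.IH[OF Ck_SucD(2)[OF Suc.prems(1)] Ck_mono[OF Suc.prems(2)]])
    done
qed

lemma Ck_inner: "Ck k (\<lambda>x. x \<bullet> a)"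
proof (cases k)
  case 0 then show ?thesis by (simp add: continuous_on_inner continuous_on_id)
next
  case (Suc m)
  show ?thesis unfolding Suc
    by (rule Ck_SucI[where D="\<lambda>x v. v \<bullet> a"]) (auto intro!: derivative_eq_intros Ck_const)
qed

lemma Ck_normsq: "Ck k (\<lambda>x. norm x ^ 2)"
proof (cases k)
  case 0 then show ?thesis by (simp add: continuous_on_norm continuous_on_power continuous_on_id)
next
  case (Suc m)
  have "((\<lambda>x. norm x ^ 2) has_derivative (\<lambda>v. 2 * (x \<bullet> v))) (at x)" for x :: 'a
  proof -
    have "((\<lambda>x. x \<bullet> x) has_derivative (\<lambda>v. x \<bullet> v + v \<bullet> x)) (at x)"
      by (rule has_derivative_inner[OF has_derivative_ident has_derivative_ident])
    moreover have "(\<lambda>x. norm x ^ 2) = (\<lambda>x::'a. x \<bullet> x)" by (simp add: power2_norm_eq_inner)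
    moreover have "(\<lambda>v. x \<bullet> v + v \<bullet> x) = (\<lambda>v. 2 * (x \<bullet> v))" by (rule ext) (simp add: inner_commute)
    ultimately show ?thesis by simp
  qed
  moreover have "Ck m (\<lambda>x. 2 * (x \<bullet> v))" for v :: 'a
    by (rule Ck_mult[OF Ck_const Ck_inner])
  ultimately show ?thesis unfolding Suc by (rule Ck_SucI)
qed

definition smooth1 :: "(nat \<Rightarrow> real \<Rightarrow> real) \<Rightarrow> bool" where
  "smooth1 H = (\<forall>j t. (H j has_real_derivative H (Suc j) t) (at t))"

lemma smooth1_shift: "smooth1 H \<Longrightarrow> smooth1 (\<lambda>j. H (Suc j))"
  by (simp add: smooth1_def)

lemma Ck_comp: "smooth1 H \<Longrightarrow> Ck k f \<Longrightarrow> Ck k (\<lambda>x. H 0 (f x))"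
proof (induction k arbitrary: H f)
  case 0
  have "continuous_on UNIV (H 0)"
    using 0(1) unfolding smooth1_def
    by (meson DERIV_isCont continuous_at_imp_continuous_on)
  then show ?case using 0(2) by (auto intro: continuous_on_compose2[of UNIV "H 0" UNIV f])
next
  case (Suc k)
  show ?case
    apply (rule Ck_SucI[where D="\<lambda>x v. frechet_derivative f (at x) v * H 1 (f x)"])
     apply (rule DERIV_compose_FDERIV[where f="H 0"])
      using Suc.prems(1) apply (simp add: smooth1_def)
     apply (rule Ck_SucD(1)[OF Suc.prems(2)])
    apply (rule Ck_mult)
     apply (rule Ck_SucD(2)[OF Suc.prems(2)])
    using Suc.IH[OF smooth1_shift[OF Suc.prems(1)] Ck_mono[OF Suc.prems(2)]] by simp
qed

lemma smooth1_affine: "smooth1 H \<Longrightarrow> smooth1 (\<lambda>j t. a ^ j * H j (a * t + b))"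
  unfolding smooth1_def
proof (intro allI)
  fix j t assume H: "\<forall>j t. (H j has_real_derivative H (Suc j) t) (at t)"
  have "((\<lambda>t. H j (a * t + b)) has_real_derivative H (Suc j) (a * t + b) * a) (at t)"
    by (rule DERIV_chain2[OF H[rule_format]]) (auto intro!: derivative_eq_intros)
  then show "((\<lambda>t. a ^ j * H j (a * t + b)) has_real_derivative a ^ Suc j * H (Suc j) (a * t + b)) (at t)"
    by (auto intro!: derivative_eq_intros simp: algebra_simps)
qed

lemma smooth1_exp: "smooth1 (\<lambda>j. exp)"
  by (simp add: smooth1_def DERIV_exp)



fun pp :: "nat \<Rightarrow> real poly" where
  "pp 0 = 1"
| "pp (Suc j) = [:0,0,1:] * (pp j - pderiv (pp j))"

definition psid :: "nat \<Rightarrow> real \<Rightarrow> real" where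
  "psid j t = (if t > 0 then poly (pp j) (inverse t) * exp (- inverse t) else 0)"

lemma poly_exp_lim: fixes q :: "real poly" shows "((\<lambda>z. poly q z * exp (- z)) \<longlongrightarrow> 0) at_top"
proof -
  have "((\<lambda>z. \<Sum>i\<le>degree q. coeff q i * (z ^ i / exp z)) \<longlongrightarrow> (\<Sum>i\<le>degree q. coeff q i * 0)) at_top"
    by (intro tendsto_sum tendsto_mult tendsto_const tendsto_power_div_exp_0)
  moreover have "(\<lambda>z. \<Sum>i\<le>degree q. coeff q i * (z ^ i / exp z)) = (\<lambda>z. poly q z * exp (-z))"
    by (rule ext) (simp add: poly_altdef sum_distrib_right exp_minus divide_inverse mult.assoc)
  ultimately show ?thesis by simp
qed

lemma poly_inv_exp_lim: fixes q :: "real poly" shows "((\<lambda>y. poly q (inverse y) * exp (- inverse y)) \<longlongrightarrow> 0) (at_right 0)"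
  using filterlim_compose[OF poly_exp_lim filterlim_inverse_at_top_right] by simp

lemma psid_deriv_pos:
  assumes t: "t > 0"
  shows "(psid j has_real_derivative psid (Suc j) t) (at t)"
proof -
  let ?p = "pp j"
  have d1: "((\<lambda>t. poly ?p (inverse t)) has_real_derivative poly (pderiv ?p) (inverse t) * (- inverse (t^2))) (at t)"
    by (rule DERIV_chain2[OF poly_DERIV]) (use t in \<open>auto intro!: derivative_eq_intros simp: power2_eq_square\<close>)
  have d2: "((\<lambda>t. exp (- inverse t)) has_real_derivative exp (- inverse t) * inverse (t^2)) (at t)"
    by (rule DERIV_chain2[OF DERIV_exp]) (use t in \<open>auto intro!: derivative_eq_intros simp: power2_eq_square\<close>)
  have d: "((\<lambda>t. poly ?p (inverse t) * exp (- inverse t)) has_real_derivative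
      poly (pderiv ?p) (inverse t) * (- inverse (t^2)) * exp (- inverse t) + poly ?p (inverse t) * (exp (- inverse t) * inverse (t^2))) (at t)"
    using DERIV_mult[OF d1 d2] by (simp add: mult_ac)
  have eq: "poly (pderiv ?p) (inverse t) * (- inverse (t^2)) * exp (- inverse t) + poly ?p (inverse t) * (exp (- inverse t) * inverse (t^2))
      = psid (Suc j) t"
    using t by (simp add: psid_def algebra_simps power2_eq_square)
  show ?thesis
    apply (rule has_field_derivative_transform_within_open[OF d[unfolded eq], of "{0<..}"])
    using t by (auto simp: psid_def)
qed

lemma psid_deriv_neg:
  assumes t: "t < 0"
  shows "(psid j has_real_derivative psid (Suc j) t) (at t)"
proof -
  have "psid (Suc j) t = 0" using t by (simp add: psid_def)
  then have "((\<lambda>t. 0) has_real_derivative psid (Suc j) t) (at t)" by simp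
  then show ?thesis
    by (rule has_field_derivative_transform_within_open[of _ _ _ "{..<0}"]) (use t in \<open>auto simp: psid_def\<close>)
qed

lemma psid_deriv_zero: "(psid j has_real_derivative psid (Suc j) 0) (at 0)"
proof -
  have z: "psid (Suc j) 0 = 0" "psid j 0 = 0" by (simp_all add: psid_def)
  have L: "((\<lambda>y. (psid j y - psid j 0) / (y - 0)) \<longlongrightarrow> 0) (at_left 0)"
  proof (rule tendsto_cong[THEN iffD1, OF _ tendsto_const])
    show "\<forall>\<^sub>F x in at_left 0. 0 = (psid j x - psid j 0) / (x - 0)"
      unfolding eventually_at_left_field by (auto simp: psid_def intro!: exI[of _ "-1"])
  qed
  have R: "((\<lambda>y. (psid j y - psid j 0) / (y - 0)) \<longlongrightarrow> 0) (at_right 0)"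
  proof (rule tendsto_cong[THEN iffD1, OF _ poly_inv_exp_lim[of "pCons 0 (pp j)"]])
    show "\<forall>\<^sub>F x in at_right 0. poly (pCons 0 (pp j)) (inverse x) * exp (- inverse x) = (psid j x - psid j 0) / (x - 0)"
      unfolding eventually_at_right_field by (auto simp: psid_def field_simps intro!: exI[of _ "1"])
  qed
  show ?thesis unfolding has_field_derivative_iff z
    using L R by (simp add: filterlim_at_split z)
qed

lemma smooth1_psid: "smooth1 psid"
  unfolding smooth1_def
proof (intro allI)
  fix j t
  show "(psid j has_real_derivative psid (Suc j) t) (at t)"
    using psid_deriv_pos psid_deriv_neg psid_deriv_zero by (cases "t > 0"; cases "t < 0") auto
qed

lemma psid0: "psid 0 t = (if t > 0 then exp (- inverse t) else 0)"
  by (simp add: psid_def)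

lemma psid1: "psid (Suc 0) t = (if t > 0 then inverse t ^ 2 * exp (- inverse t) else 0)"
  by (simp add: psid_def power2_eq_square)

lemma psi_nonneg: "psid 0 t \<ge> 0" by (simp add: psid0)
lemma psi_pos: "t > 0 \<Longrightarrow> psid 0 t > 0" by (simp add: psid0)
lemma psi_zero: "t \<le> 0 \<Longrightarrow> psid 0 t = 0" by (simp add: psid0)
lemma psi_mono: "s \<le> t \<Longrightarrow> psid 0 s \<le> psid 0 t"
  by (auto simp: psid0 intro!: le_imp_inverse_le)

lemma sq_exp_bound: "y \<ge> 0 \<Longrightarrow> y ^ 2 * exp (- y) \<le> (4::real)"
proof -
  assume y: "y \<ge> 0"
  have "y / 2 \<le> exp (y / 2)" using exp_ge_add_one_self[of "y/2"] by linarith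
  then have "(y/2)^2 \<le> exp (y/2) ^ 2" using y by (intro power_mono) auto
  also have "exp (y/2) ^ 2 = exp y" by (simp add: power2_eq_square exp_add[symmetric])
  finally have "y^2 \<le> 4 * exp y" by (simp add: power_divide)
  then show ?thesis by (simp add: exp_minus field_simps)
qed

lemma psi1_bound: "\<bar>psid (Suc 0) t\<bar> \<le> 4"
proof (cases "t > 0")
  case True
  then show ?thesis using sq_exp_bound[of "inverse t"] by (simp add: psid1)
qed (simp add: psid1)



lemma L2sq_eq:
  fixes f :: "'a::euclidean_space \<Rightarrow> 'b::real_normed_vector"
  assumes "continuous_on UNIV f"
  shows "L2sq c f = integral\<^sup>L lborel (\<lambda>x. exp (c * norm x ^ 2) * norm (f x) ^ 2)"
proof -
  have "continuous_on UNIV (\<lambda>x. norm (f x) ^ 2)" by (intro continuous_intros assms)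
  then have "(\<lambda>x. norm (f x) ^ 2) \<in> borel_measurable borel" by (rule borel_measurable_continuous_onI)
  then have m: "(\<lambda>x. norm (f x) ^ 2) \<in> borel_measurable lborel" by simp
  show ?thesis unfolding L2sq_def gmu_def
    by (subst integral_density[OF m]) auto
qed

lemma integrable_cont_compact:
  fixes f :: "'a::euclidean_space \<Rightarrow> real"
  assumes "continuous_on UNIV f" "\<And>x. r < norm x \<Longrightarrow> f x = 0"
  shows "integrable lborel f"
proof -
  have "integrable lborel (\<lambda>x. indicator (cball 0 r) x *\<^sub>R f x)"
    by (rule borel_integrable_compact[OF compact_cball continuous_on_subset[OF assms(1)]]) auto
  moreover have "(\<lambda>x. indicator (cball 0 r) x *\<^sub>R f x) = f"
    using assms(2) by (auto simp: indicator_def fun_eq_iff not_le)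
  ultimately show ?thesis by simp
qed

lemma integral_pos:
  fixes f :: "'a::euclidean_space \<Rightarrow> real"
  assumes cont: "continuous_on UNIV f" and nn: "\<And>x. f x \<ge> 0" and int: "integrable lborel f"
    and pos: "f x0 > 0"
  shows "integral\<^sup>L lborel f > 0"
proof -
  have "isCont f x0" using cont by (simp add: continuous_on_eq_continuous_at)
  then obtain d where d: "d > 0" "\<And>y. dist y x0 < d \<Longrightarrow> dist (f y) (f x0) < f x0 / 2"
    using pos unfolding continuous_at_eps_delta by (metis half_gt_zero)
  let ?g = "\<lambda>x. f x0 / 2 * indicator (ball x0 d) x"
  have ig: "integrable lborel ?g"
    using emeasure_lborel_ball_finite[of x0 d] by (intro integrable_mult_right) (simp add: integrable_indicator_iff)
  have "?g x \<le> f x" for x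
  proof (cases "x \<in> ball x0 d")
    case True
    then have "dist x x0 < d" by (simp add: dist_commute)
    then have "dist (f x) (f x0) < f x0 / 2" using d(2) by blast
    moreover have "f x0 - f x \<le> \<bar>f x - f x0\<bar>" by simp
    ultimately show ?thesis using True by (simp add: dist_real_def)
  qed (simp add: nn)
  then have "integral\<^sup>L lborel ?g \<le> integral\<^sup>L lborel f"
    by (intro integral_mono ig int)
  moreover have "integral\<^sup>L lborel ?g = f x0 / 2 * measure lborel (ball x0 d)"
    by simp
  moreover have "measure lborel (ball x0 d) > 0"
    using content_ball_pos[OF d(1)] by simp
  ultimately show ?thesis using pos
    by (smt (verit, best) mult_pos_pos half_gt_zero)
qed

lemma gauss1_integrable:
  fixes a :: real assumes a: "a > 0"
  shows "integrable lborel (\<lambda>t::real. exp (- a * t ^ 2))"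
proof -
  have "integrable lborel (\<lambda>x. std_normal_density (0 + sqrt (2 * a) * x))"
    using a by (intro lborel_integrable_real_affine integrable_normal_density) auto
  then have "integrable lborel (\<lambda>x. sqrt (2 * pi) * std_normal_density (0 + sqrt (2 * a) * x))"
    by (rule integrable_mult_right)
  moreover have "(\<lambda>x. sqrt (2 * pi) * std_normal_density (0 + sqrt (2 * a) * x)) = (\<lambda>x. exp (- a * x ^ 2))"
    using a by (simp add: normal_density_def power_mult_distrib fun_eq_iff)
  ultimately show ?thesis by (simp only:)
qed

lemma normsq_sum: "norm (x::'a::euclidean_space) ^ 2 = (\<Sum>b\<in>Basis. (x \<bullet> b) ^ 2)"
proof -
  have "norm x ^ 2 = x \<bullet> x" by (simp add: power2_norm_eq_inner)
  also have "\<dots> = (\<Sum>b\<in>Basis. (x \<bullet> b) * (x \<bullet> b))" by (rule euclidean_inner)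
  finally show ?thesis by (simp add: power2_eq_square)
qed

lemma gauss_integrable:
  fixes a :: real assumes a: "a > 0"
  shows "integrable lborel (\<lambda>x::'a::euclidean_space. exp (- a * norm x ^ 2))"
proof (rule integrableI_nonneg)
  show "(\<lambda>x::'a. exp (- a * norm x ^ 2)) \<in> borel_measurable lborel" by measurable
  show "AE x in lborel. 0 \<le> exp (- a * norm (x::'a) ^ 2)" by simp
  have eq: "ennreal (exp (- a * norm x ^ 2)) = (\<Prod>b\<in>Basis. ennreal (exp (- a * (x \<bullet> b) ^ 2)))" for x :: 'a
    by (simp add: prod_ennreal normsq_sum sum_distrib_left exp_sum[symmetric])
  have "(\<integral>\<^sup>+x. ennreal (exp (- a * norm (x::'a) ^ 2)) \<partial>lborel)
      = (\<integral>\<^sup>+x. (\<Prod>b\<in>(Basis::'a set). (\<lambda>b t. ennreal (exp (- a * t ^ 2))) b (x \<bullet> b)) \<partial>lborel)"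
    by (simp only: eq)
  also have "\<dots> = (\<Prod>b\<in>(Basis::'a set). (\<integral>\<^sup>+t. ennreal (exp (- a * t ^ 2)) \<partial>lborel))"
    by (rule nn_integral_lborel_prod) auto
  also have "\<dots> < \<infinity>"
  proof -
    have "(\<integral>\<^sup>+t. ennreal (norm (exp (- a * t ^ 2))) \<partial>lborel) < \<infinity>"
      using gauss1_integrable[OF a] unfolding integrable_iff_bounded by simp
    then have "(\<integral>\<^sup>+t. ennreal (exp (- a * t ^ 2)) \<partial>lborel) < \<infinity>" by simp
    then show ?thesis by (simp add: prod_constant power_less_top_ennreal)
  qed
  finally show "(\<integral>\<^sup>+x. ennreal (exp (- a * norm (x::'a) ^ 2)) \<partial>lborel) < \<infinity>" .
qed

lemma t_exp_bound: "(c::real) > 0 \<Longrightarrow> t \<ge> 0 \<Longrightarrow> t * exp (- c * t) \<le> (2 / c) * exp (- (c / 2) * t)"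
proof -
  assume c: "c > 0" and t: "t \<ge> 0"
  have "c * t / 2 \<le> exp (c * t / 2)" using exp_ge_add_one_self[of "c*t/2"] by linarith
  then have "t \<le> (2 / c) * exp (c * t / 2)" using c by (simp add: field_simps)
  then have "t * exp (- c * t) \<le> (2 / c) * exp (c * t / 2) * exp (- c * t)"
    by (intro mult_right_mono) auto
  also have "\<dots> = (2 / c) * exp (- (c / 2) * t)"
    by (simp add: mult.assoc exp_add[symmetric])
  finally show ?thesis .
qed

lemma gauss2_integrable:
  fixes c :: real assumes c: "c > 0"
  shows "integrable lborel (\<lambda>x::'a::euclidean_space. norm x ^ 2 * exp (- c * norm x ^ 2))"
proof (rule Bochner_Integration.integrable_bound[where f="\<lambda>x::'a. (2 / c) * exp (- (c / 2) * norm x ^ 2)"])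
  show "integrable lborel (\<lambda>x::'a. (2 / c) * exp (- (c / 2) * norm x ^ 2))"
    using c by (intro integrable_mult_right gauss_integrable) auto
  show "(\<lambda>x::'a. norm x ^ 2 * exp (- c * norm x ^ 2)) \<in> borel_measurable lborel" by measurable
  show "AE x in lborel. norm (norm (x::'a) ^ 2 * exp (- c * norm x ^ 2)) \<le> norm ((2 / c) * exp (- (c / 2) * norm x ^ 2))"
    using t_exp_bound[OF c, of "norm _ ^ 2"] c by (auto simp: abs_mult)
qed

lemma scale_integral:
  fixes h :: "'a::euclidean_space \<Rightarrow> real" and c :: real
  assumes h: "integrable lborel h" and c: "c > 0"
  shows "integrable lborel (\<lambda>x. h (c *\<^sub>R x))"
    and "integral\<^sup>L lborel h = c ^ DIM('a) * integral\<^sup>L lborel (\<lambda>x. h (c *\<^sub>R x))"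
proof -
  have hm[measurable]: "h \<in> borel_measurable borel" using h by (simp add: borel_measurable_integrable)
  have L: "(lborel::'a measure) = density (distr lborel borel (\<lambda>x. 0 + c *\<^sub>R x)) (\<lambda>x. ennreal (\<bar>c\<bar> ^ DIM('a)))"
    using lborel_affine[of c "0::'a"] c by simp
  have "integrable (density (distr lborel borel (\<lambda>x::'a. 0 + c *\<^sub>R x)) (\<lambda>x. ennreal (\<bar>c\<bar> ^ DIM('a)))) h"
    using h L by simp
  then have "integrable (distr lborel borel (\<lambda>x::'a. 0 + c *\<^sub>R x)) (\<lambda>x. \<bar>c\<bar> ^ DIM('a) *\<^sub>R h x)"
    by (subst (asm) integrable_density) auto
  then have "integrable lborel (\<lambda>x. \<bar>c\<bar> ^ DIM('a) *\<^sub>R h (0 + c *\<^sub>R x))"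
    by (subst (asm) integrable_distr_eq) auto
  then have "integrable lborel (\<lambda>x. (1 / c ^ DIM('a)) * (c ^ DIM('a) * h (c *\<^sub>R x)))"
    using c by (intro integrable_mult_right) simp
  then show "integrable lborel (\<lambda>x. h (c *\<^sub>R x))" using c by simp
  have "integral\<^sup>L lborel h = integral\<^sup>L (density (distr lborel borel (\<lambda>x::'a. 0 + c *\<^sub>R x)) (\<lambda>x. ennreal (\<bar>c\<bar> ^ DIM('a)))) h"
    using L by simp
  also have "\<dots> = integral\<^sup>L (distr lborel borel (\<lambda>x::'a. 0 + c *\<^sub>R x)) (\<lambda>x. \<bar>c\<bar> ^ DIM('a) *\<^sub>R h x)"
    by (subst integral_density) auto
  also have "\<dots> = integral\<^sup>L lborel (\<lambda>x. \<bar>c\<bar> ^ DIM('a) *\<^sub>R h (0 + c *\<^sub>R x))"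
    by (subst integral_distr) auto
  also have "\<dots> = c ^ DIM('a) * integral\<^sup>L lborel (\<lambda>x. h (c *\<^sub>R x))"
    using c by simp
  finally show "integral\<^sup>L lborel h = c ^ DIM('a) * integral\<^sup>L lborel (\<lambda>x. h (c *\<^sub>R x))" .
qed



lemma s_seq: "filterlim (\<lambda>k::nat. 1 / (real k + 2)) (at (0::real)) sequentially"
proof -
  have "(\<lambda>k::nat. 1 / (real k + 2)) \<longlonglongrightarrow> 0"
  proof -
    have "filterlim (\<lambda>k::nat. real k + 2) at_top sequentially"
      unfolding filterlim_at_top eventually_sequentially
    proof
      fix Z :: real
      show "\<exists>N. \<forall>n\<ge>N. Z \<le> real n + 2"
      proof (intro exI allI impI)
        fix n assume "nat \<lceil>Z\<rceil> \<le> n"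
        then have "real (nat \<lceil>Z\<rceil>) \<le> real n" by simp
        moreover have "Z \<le> real (nat \<lceil>Z\<rceil>)" by (rule of_nat_ceiling)
        ultimately show "Z \<le> real n + 2" by linarith
      qed
    qed
    then show ?thesis by (rule real_tendsto_divide_at_top[OF tendsto_const])
  qed
  moreover have "\<forall>\<^sub>F k in sequentially. 1 / (real k + 2) \<in> UNIV - {0::real}" by simp
  ultimately show ?thesis
    unfolding filterlim_at by auto
qed

lemma deriv_seq:
  fixes f :: "real \<Rightarrow> real"
  assumes "(f has_real_derivative D) (at 0)"
  shows "(\<lambda>k. (f (1 / (real k + 2)) - f 0) / (1 / (real k + 2))) \<longlonglongrightarrow> D"
proof -
  have "((\<lambda>y. (f y - f 0) / (y - 0)) \<longlongrightarrow> D) (at 0)" using assms has_field_derivative_iff by blast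
  from filterlim_compose[OF this s_seq] show ?thesis by simp
qed

lemma scaling_deriv:
  fixes h :: "'a::euclidean_space \<Rightarrow> real" and G :: "'a \<Rightarrow> real"
  assumes hint: "integrable lborel h"
    and hd: "\<And>x. (h has_derivative Dh x) (at x)"
    and Dm: "(\<lambda>x. Dh x x) \<in> borel_measurable borel"
    and Gint: "integrable lborel G"
    and dom: "\<And>x s. 0 < s \<Longrightarrow> s \<le> 1/2 \<Longrightarrow> \<bar>h (x + s *\<^sub>R x) - h x\<bar> \<le> s * G x"
  shows "integral\<^sup>L lborel (\<lambda>x. Dh x x) = - real DIM('a) * integral\<^sup>L lborel h"
proof -
  define s where "s k = 1 / (real k + 2)" for k :: nat
  have s_pos: "0 < s k" "s k \<le> 1/2" for k by (auto simp: s_def field_simps)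
  define Q where "Q k x = (h (x + s k *\<^sub>R x) - h x) / s k" for k x
  have hm[measurable]: "h \<in> borel_measurable borel" using hint by (simp add: borel_measurable_integrable)
  have Qm: "Q k \<in> borel_measurable lborel" for k unfolding Q_def[abs_def] by measurable
  have lim1: "(\<lambda>k. Q k x) \<longlonglongrightarrow> Dh x x" for x
  proof -
    have "((\<lambda>t. x + t *\<^sub>R x) has_derivative (\<lambda>t. t *\<^sub>R x)) (at 0)"
      by (auto intro!: derivative_eq_intros)
    then have "((\<lambda>t. h (x + t *\<^sub>R x)) has_derivative (\<lambda>t. Dh x (t *\<^sub>R x))) (at 0)"
      using has_derivative_compose[of "\<lambda>t. x + t *\<^sub>R x" _ 0 UNIV h] hd[of x] by simp
    moreover have "(\<lambda>t. Dh x (t *\<^sub>R x)) = (\<lambda>t. Dh x x * t)"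
      using has_derivative_linear[OF hd[of x]] by (auto simp: linear_scale fun_eq_iff)
    ultimately have "((\<lambda>t. h (x + t *\<^sub>R x)) has_real_derivative Dh x x) (at 0)"
      by (simp add: has_field_derivative_def)
    from deriv_seq[OF this] show ?thesis by (simp add: Q_def s_def)
  qed
  have bound: "norm (Q k x) \<le> G x" for k x
    using dom[OF s_pos(1)[of k] s_pos(2)[of k], of x] s_pos(1)[of k] by (simp add: Q_def abs_divide pos_divide_le_eq mult.commute)
  have L1: "(\<lambda>k. integral\<^sup>L lborel (Q k)) \<longlonglongrightarrow> integral\<^sup>L lborel (\<lambda>x. Dh x x)"
    by (rule integral_dominated_convergence[OF _ Qm Gint]) (use Dm lim1 bound in auto)
  define N where "N = DIM('a)"
  have intQ: "integral\<^sup>L lborel (Q k) = integral\<^sup>L lborel h * ((1 / (1 + s k) ^ N - 1) / s k)" for k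
  proof -
    have c: "1 + s k > 0" using s_pos[of k] by simp
    note sc = scale_integral[OF hint c]
    have "Q k = (\<lambda>x. (h ((1 + s k) *\<^sub>R x) - h x) / s k)"
      by (auto simp: Q_def fun_eq_iff scaleR_add_left)
    then have "integral\<^sup>L lborel (Q k) = (integral\<^sup>L lborel (\<lambda>x. h ((1 + s k) *\<^sub>R x)) - integral\<^sup>L lborel h) / s k"
      using sc(1) hint by (simp add: integral_diff)
    also have "integral\<^sup>L lborel (\<lambda>x. h ((1 + s k) *\<^sub>R x)) = integral\<^sup>L lborel h / (1 + s k) ^ N"
      using sc(2) c by (simp add: N_def field_simps)
    finally show ?thesis by (simp add: field_simps)
  qed
  have "((\<lambda>t. 1 / (1 + t) ^ N) has_real_derivative - real N) (at 0)"
    by (auto intro!: derivative_eq_intros)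
  from deriv_seq[OF this] have "(\<lambda>k. (1 / (1 + s k) ^ N - 1) / s k) \<longlonglongrightarrow> - real N"
    by (simp add: s_def)
  then have L2: "(\<lambda>k. integral\<^sup>L lborel (Q k)) \<longlonglongrightarrow> integral\<^sup>L lborel h * (- real N)"
    unfolding intQ by (intro tendsto_mult tendsto_const)
  from LIMSEQ_unique[OF L1 L2] show ?thesis by (simp add: N_def)
qed



lemma ray_deriv:
  fixes h :: "'a::real_normed_vector \<Rightarrow> real"
  assumes "(h has_derivative D) (at (x + t *\<^sub>R x))"
  shows "((\<lambda>t. h (x + t *\<^sub>R x)) has_real_derivative D x) (at t)"
proof -
  have d1: "((\<lambda>t. x + t *\<^sub>R x) has_derivative (\<lambda>u. u *\<^sub>R x)) (at t)"
    by (auto intro!: derivative_eq_intros)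
  have "((\<lambda>t. h (x + t *\<^sub>R x)) has_derivative (\<lambda>u. D (u *\<^sub>R x))) (at t)"
    by (rule has_derivative_compose[OF d1 assms])
  moreover have "(\<lambda>u. D (u *\<^sub>R x)) = (\<lambda>u. D x * u)"
    using has_derivative_linear[OF assms] by (auto simp: linear_scale fun_eq_iff)
  ultimately show ?thesis by (simp add: has_field_derivative_def)
qed

lemma lin_expand:
  fixes L :: "'a::euclidean_space \<Rightarrow> real"
  assumes "linear L"
  shows "L x = (\<Sum>e\<in>Basis. (x \<bullet> e) * L e)"
proof -
  have "L x = L (\<Sum>e\<in>Basis. (x \<bullet> e) *\<^sub>R e)" by (simp add: euclidean_representation)
  also have "\<dots> = (\<Sum>e\<in>Basis. (x \<bullet> e) * L e)"
    using assms by (simp add: linear_sum linear_scale)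
  finally show ?thesis .
qed

lemma scaling_deriv_compact:
  fixes h :: "'a::euclidean_space \<Rightarrow> real"
  assumes hd: "\<And>x. (h has_derivative Dh x) (at x)"
    and Dc: "\<And>e. e \<in> Basis \<Longrightarrow> continuous_on UNIV (\<lambda>x. Dh x e)"
    and supp0: "\<And>x. r < norm x \<Longrightarrow> h x = 0"
  shows "integral\<^sup>L lborel (\<lambda>x. Dh x x) = - real DIM('a) * integral\<^sup>L lborel h"
proof -
  define R where "R = max r 0"
  have R: "R \<ge> 0" by (simp add: R_def)
  have supp: "\<And>x. R < norm x \<Longrightarrow> h x = 0" using supp0 by (simp add: R_def)
  have hc: "continuous_on UNIV h"
    using hd by (meson continuous_at_imp_continuous_on has_derivative_continuous)
  have hint: "integrable lborel h" by (rule integrable_cont_compact[OF hc supp])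
  have lin: "Dh x v = (\<Sum>e\<in>Basis. (v \<bullet> e) * Dh x e)" for x v
    by (rule lin_expand[OF has_derivative_linear[OF hd]])
  have Dcont: "continuous_on UNIV (\<lambda>x. Dh x x)"
  proof -
    have "continuous_on UNIV (\<lambda>x. \<Sum>e\<in>Basis. (x \<bullet> e) * Dh x e)"
      by (intro continuous_intros Dc) auto
    then show ?thesis by (subst (asm) lin[symmetric])
  qed
  have Dm: "(\<lambda>x. Dh x x) \<in> borel_measurable borel"
    by (rule borel_measurable_continuous_onI[OF Dcont])
  define F where "F y = (\<Sum>e\<in>Basis. \<bar>Dh y e\<bar>)" for y
  have Fc: "continuous_on (cball 0 (2 * R)) F"
    unfolding F_def by (intro continuous_intros continuous_on_subset[OF Dc]) auto
  have "bounded (F ` cball 0 (2 * R))"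
    by (rule compact_imp_bounded[OF compact_continuous_image[OF Fc compact_cball]])
  then obtain B0 where B0: "\<And>y. y \<in> cball 0 (2 * R) \<Longrightarrow> \<bar>F y\<bar> \<le> B0"
    unfolding bounded_real by (meson image_eqI)
  define B where "B = max B0 0"
  have B: "B \<ge> 0" "\<And>(y::'a) (e::'a). y \<in> cball 0 (2 * R) \<Longrightarrow> e \<in> Basis \<Longrightarrow> \<bar>Dh y e\<bar> \<le> B"
  proof -
    show "B \<ge> 0" by (simp add: B_def)
    fix y e :: 'a assume y: "y \<in> cball 0 (2 * R)" and e: "e \<in> Basis"
    have "\<bar>Dh y e\<bar> \<le> F y" unfolding F_def
      by (rule member_le_sum[OF e]) auto
    also have "\<dots> \<le> \<bar>F y\<bar>" by simp
    also have "\<dots> \<le> B" using B0[OF y] by (simp add: B_def)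
    finally show "\<bar>Dh y e\<bar> \<le> B" .
  qed
  have Dbound: "\<bar>Dh y v\<bar> \<le> real DIM('a) * B * norm v" if y: "y \<in> cball 0 (2 * R)" for y v :: 'a
  proof -
    have "\<bar>Dh y v\<bar> = \<bar>\<Sum>e\<in>Basis. (v \<bullet> e) * Dh y e\<bar>" by (simp add: lin[of y v])
    also have "\<dots> \<le> (\<Sum>e\<in>(Basis::'a set). \<bar>(v \<bullet> e) * Dh y e\<bar>)" by (rule sum_abs)
    also have "\<dots> \<le> (\<Sum>e\<in>(Basis::'a set). norm v * B)"
    proof (rule sum_mono)
      fix e :: 'a assume e: "e \<in> Basis"
      have "\<bar>v \<bullet> e\<bar> \<le> norm v" using Basis_le_norm[OF e] .
      moreover have "\<bar>Dh y e\<bar> \<le> B" using B(2)[OF y e] .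
      ultimately show "\<bar>(v \<bullet> e) * Dh y e\<bar> \<le> norm v * B"
        by (simp add: abs_mult mult_mono)
    qed
    also have "\<dots> = real DIM('a) * B * norm v" by simp
    finally show ?thesis .
  qed
  define G where "G x = real DIM('a) * B * R * indicator (cball 0 R) x" for x :: 'a
  have Gint: "integrable lborel G"
  proof -
    have "integrable lborel (\<lambda>x::'a. (real DIM('a) * B * R) * indicator (cball 0 R) x)"
      using emeasure_lborel_cball_finite[of "0::'a" R]
      by (intro integrable_mult_right) (simp add: integrable_indicator_iff)
    then show ?thesis unfolding G_def[abs_def] .
  qed
  have dom: "\<bar>h (x + s *\<^sub>R x) - h x\<bar> \<le> s * G x" if s: "0 < s" "s \<le> 1/2" for x :: 'a and s :: real
  proof (cases "norm x \<le> R")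
    case True
    have "\<forall>t. 0 \<le> t \<and> t \<le> s \<longrightarrow> ((\<lambda>t. h (x + t *\<^sub>R x)) has_real_derivative Dh (x + t *\<^sub>R x) x) (at t)"
      using ray_deriv[OF hd] by blast
    then obtain z where z: "0 < z" "z < s" "h (x + s *\<^sub>R x) - h (x + 0 *\<^sub>R x) = (s - 0) * Dh (x + z *\<^sub>R x) x"
      using MVT2[of 0 s "\<lambda>t. h (x + t *\<^sub>R x)" "\<lambda>t. Dh (x + t *\<^sub>R x) x"] s by auto
    have "x + z *\<^sub>R x = (1 + z) *\<^sub>R x" by (simp add: algebra_simps)
    then have "norm (x + z *\<^sub>R x) = (1 + z) * norm x"
      using z by simp
    also have "\<dots> \<le> 2 * R" using True z s R by (intro mult_mono) auto
    finally have y: "x + z *\<^sub>R x \<in> cball 0 (2 * R)" by simp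
    have "\<bar>h (x + s *\<^sub>R x) - h x\<bar> = s * \<bar>Dh (x + z *\<^sub>R x) x\<bar>" using z s by (simp add: abs_mult)
    also have "\<dots> \<le> s * (real DIM('a) * B * norm x)"
      using Dbound[OF y, of x] s by (intro mult_left_mono) auto
    also have "\<dots> \<le> s * (real DIM('a) * B * R)"
      using True s B by (intro mult_left_mono) auto
    also have "\<dots> = s * G x" using True by (simp add: G_def)
    finally show ?thesis .
  next
    case False
    have "x + s *\<^sub>R x = (1 + s) *\<^sub>R x" by (simp add: algebra_simps)
    then have "norm (x + s *\<^sub>R x) = (1 + s) * norm x"
      using s by simp
    also have "\<dots> \<ge> norm x" using s by (simp add: algebra_simps)
    finally have "R < norm (x + s *\<^sub>R x)" using False by linarith
    then show ?thesis using False supp[of x] supp[of "x + s *\<^sub>R x"] s B R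
      by (simp add: G_def)
  qed
  show ?thesis
    by (rule scaling_deriv[OF hint hd Dm Gint dom])
qed



lemma normsq_deriv: "((\<lambda>x. norm x ^ 2) has_derivative (\<lambda>v. 2 * (x \<bullet> v))) (at x)"
proof -
  have "((\<lambda>x. x \<bullet> x) has_derivative (\<lambda>v. x \<bullet> v + v \<bullet> x)) (at x)"
    by (rule has_derivative_inner[OF has_derivative_ident has_derivative_ident])
  moreover have "(\<lambda>x. norm x ^ 2) = (\<lambda>x::'a. x \<bullet> x)" by (simp add: power2_norm_eq_inner)
  moreover have "(\<lambda>v. x \<bullet> v + v \<bullet> x) = (\<lambda>v. 2 * (x \<bullet> v))" by (rule ext) (simp add: inner_commute)
  ultimately show ?thesis by simp
qed

lemma w_deriv: "((\<lambda>x. exp (c * norm x ^ 2)) has_derivative (\<lambda>v. c * (2 * (x \<bullet> v)) * exp (c * norm x ^ 2))) (at x)"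
proof -
  have "((\<lambda>x. c * norm x ^ 2) has_derivative (\<lambda>v. c * (2 * (x \<bullet> v)))) (at x)"
    by (rule has_derivative_mult_right[OF normsq_deriv])
  from DERIV_compose_FDERIV[OF DERIV_exp this] show ?thesis .
qed

lemma grad_eq:
  assumes "(u has_derivative D) (at x)"
  shows "grad u x = (\<Sum>e\<in>Basis. D e *\<^sub>R e)"
  using fd_eq[OF assms] by (simp add: grad_def)

lemma grad_inner:
  assumes "(u has_derivative D) (at x)"
  shows "grad u x \<bullet> v = D v"
proof -
  have "grad u x \<bullet> v = (\<Sum>e\<in>Basis. D e * (e \<bullet> v))"
    by (simp add: grad_eq[OF assms] inner_sum_left)
  also have "\<dots> = D v"
    using lin_expand[OF has_derivative_linear[OF assms], of v] by (simp add: inner_commute mult.commute)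
  finally show ?thesis .
qed

lemma grad_lin:
  assumes "(u has_derivative (\<lambda>v. a \<bullet> v)) (at x)"
  shows "grad u x = a"
proof -
  have "grad u x = (\<Sum>e\<in>Basis. (a \<bullet> e) *\<^sub>R e)" by (rule grad_eq[OF assms])
  then show ?thesis by (simp add: euclidean_representation)
qed

lemma key_identity:
  fixes u :: "'a::euclidean_space \<Rightarrow> real"
  assumes ud: "\<And>x. (u has_derivative D x) (at x)"
    and Dc: "\<And>e. e \<in> Basis \<Longrightarrow> continuous_on UNIV (\<lambda>x. D x e)"
    and supp: "\<And>x. r < norm x \<Longrightarrow> u x = 0"
  shows "L2sq c (grad u) = 2 * c * real DIM('a) * L2sq c u
           + integral\<^sup>L lborel (\<lambda>x. exp (c * norm x ^ 2) * norm (grad u x + (2 * c * u x) *\<^sub>R x) ^ 2)"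
proof -
  define w where "w x = exp (c * norm x ^ 2)" for x :: 'a
  have wc: "continuous_on UNIV w" unfolding w_def by (intro continuous_intros)
  have uc: "continuous_on UNIV u"
    using ud by (meson continuous_at_imp_continuous_on has_derivative_continuous)
  have gc: "continuous_on UNIV (grad u)"
  proof -
    have "grad u = (\<lambda>x. \<Sum>e\<in>Basis. D x e *\<^sub>R e)" using grad_eq[OF ud] by auto
    moreover have "continuous_on UNIV (\<lambda>x. \<Sum>e\<in>Basis. D x e *\<^sub>R e)"
      by (intro continuous_intros Dc) auto
    ultimately show ?thesis by simp
  qed
  define h where "h x = u x * u x * w x" for x
  define Dh where "Dh x v = u x * u x * (c * (2 * (x \<bullet> v)) * w x) + (u x * D x v + D x v * u x) * w x" for x v
  have hd: "(h has_derivative Dh x) (at x)" for x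
    unfolding h_def[abs_def] Dh_def w_def
    by (intro has_derivative_mult ud w_deriv)
  have Dhc: "continuous_on UNIV (\<lambda>x. Dh x e)" if e: "e \<in> Basis" for e
    unfolding Dh_def by (intro continuous_intros uc wc Dc e)
  have hsupp: "r < norm x \<Longrightarrow> h x = 0" for x using supp by (simp add: h_def)
  have S: "integral\<^sup>L lborel (\<lambda>x. Dh x x) = - real DIM('a) * integral\<^sup>L lborel h"
    by (rule scaling_deriv_compact[OF hd Dhc hsupp])
  have Dhx: "Dh x x = 2 * (2 * c * u x * u x * norm x ^ 2 * w x + 2 * u x * (grad u x \<bullet> x) * w x) / 2" for x
    by (simp add: Dh_def grad_inner[OF ud] power2_norm_eq_inner algebra_simps)
  have pt: "w x * norm (grad u x + (2 * c * u x) *\<^sub>R x) ^ 2 = w x * norm (grad u x) ^ 2 + 2 * c * Dh x x" for x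
    by (simp add: Dhx power2_norm_eq_inner inner_add_left inner_add_right inner_commute algebra_simps)
  have i1: "integrable lborel (\<lambda>x. w x * norm (grad u x) ^ 2)"
  proof (rule integrable_cont_compact[of _ r])
    show "continuous_on UNIV (\<lambda>x. w x * norm (grad u x) ^ 2)" by (intro continuous_intros wc gc)
    fix x :: 'a assume x: "r < norm x"
    have "\<forall>\<^sub>F y in at x. 0 = u y"
      using x supp unfolding eventually_at_topological
      by (intro exI[of _ "{y. r < norm y}"]) (auto intro: open_Collect_less continuous_intros)
    then have "(u has_derivative (\<lambda>v. 0)) (at x)"
      by (rule has_derivative_transform_eventually[OF has_derivative_const]) (auto simp: supp[OF x])
    then have "grad u x = 0" using grad_lin[of u "0::'a" x] by simp
    then show "w x * norm (grad u x) ^ 2 = 0" by simp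
  qed
  have i2: "integrable lborel (\<lambda>x. Dh x x)"
  proof (rule integrable_cont_compact[of _ r])
    have "continuous_on UNIV (\<lambda>x. \<Sum>e\<in>Basis. (x \<bullet> e) * Dh x e)"
      by (intro continuous_intros Dhc) auto
    moreover have "(\<lambda>x. \<Sum>e\<in>Basis. (x \<bullet> e) * Dh x e) = (\<lambda>x. Dh x x)"
      by (rule ext) (rule lin_expand[OF has_derivative_linear[OF hd], symmetric])
    ultimately show "continuous_on UNIV (\<lambda>x. Dh x x)" by (simp only:)
    show "r < norm x \<Longrightarrow> Dh x x = 0" for x using supp[of x] by (simp add: Dh_def)
  qed
  have "integral\<^sup>L lborel (\<lambda>x. exp (c * norm x ^ 2) * norm (grad u x + (2 * c * u x) *\<^sub>R x) ^ 2)
      = integral\<^sup>L lborel (\<lambda>x. w x * norm (grad u x) ^ 2 + 2 * c * Dh x x)"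
    by (rule Bochner_Integration.integral_cong[OF refl]) (use pt[unfolded w_def] in \<open>simp add: w_def\<close>)
  also have "\<dots> = integral\<^sup>L lborel (\<lambda>x. w x * norm (grad u x) ^ 2) + 2 * c * integral\<^sup>L lborel (\<lambda>x. Dh x x)"
    using i1 i2 by simp
  also have "integral\<^sup>L lborel (\<lambda>x. w x * norm (grad u x) ^ 2) = L2sq c (grad u)"
    by (simp add: L2sq_eq[OF gc] w_def)
  finally have fin: "integral\<^sup>L lborel (\<lambda>x. exp (c * norm x ^ 2) * norm (grad u x + (2 * c * u x) *\<^sub>R x) ^ 2)
     = L2sq c (grad u) + 2 * c * integral\<^sup>L lborel (\<lambda>x. Dh x x)" .
  have hL: "integral\<^sup>L lborel h = L2sq c u"
    by (simp add: L2sq_eq[OF uc] w_def h_def[abs_def] power2_eq_square mult.commute)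
  show ?thesis using fin S hL by simp
qed

lemma lower_bound:
  fixes u :: "'a::euclidean_space \<Rightarrow> real"
  assumes ud: "\<And>x. (u has_derivative D x) (at x)"
    and Dc: "\<And>e. e \<in> Basis \<Longrightarrow> continuous_on UNIV (\<lambda>x. D x e)"
    and supp: "\<And>x. r < norm x \<Longrightarrow> u x = 0"
  shows "L2sq c (grad u) \<ge> 2 * c * real DIM('a) * L2sq c u"
proof -
  have "integral\<^sup>L lborel (\<lambda>x. exp (c * norm x ^ 2) * norm (grad u x + (2 * c * u x) *\<^sub>R x) ^ 2) \<ge> 0"
    by (rule Bochner_Integration.integral_nonneg) simp
  moreover have "L2sq c (grad u) = 2 * c * real DIM('a) * L2sq c u
           + integral\<^sup>L lborel (\<lambda>x. exp (c * norm x ^ 2) * norm (grad u x + (2 * c * u x) *\<^sub>R x) ^ 2)"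
    by (rule key_identity[of u D r]) (use ud Dc supp in auto)
  ultimately show ?thesis by linarith
qed



lemma gauss_ratio:
  fixes c :: real assumes c: "c > 0"
  shows "L2sq c (grad (\<lambda>x::'a::euclidean_space. exp (- c * norm x ^ 2)))
       = 2 * c * real DIM('a) * L2sq c (\<lambda>x::'a. exp (- c * norm x ^ 2))"
    and "L2sq c (\<lambda>x::'a. exp (- c * norm x ^ 2)) > 0"
proof -
  define g where "g x = exp (- c * norm x ^ 2)" for x :: 'a
  define Dh where "Dh x v = - c * (2 * (x \<bullet> v)) * g x" for x v :: 'a
  have gd: "(g has_derivative Dh x) (at x)" for x
  proof -
    have "((\<lambda>x. - c * norm x ^ 2) has_derivative (\<lambda>v. - c * (2 * (x \<bullet> v)))) (at x)"
      by (rule has_derivative_mult_right[OF normsq_deriv])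
    from DERIV_compose_FDERIV[OF DERIV_exp this] show ?thesis
      unfolding g_def[abs_def] Dh_def[abs_def] by (simp add: mult_ac)
  qed
  have gc: "continuous_on UNIV g" unfolding g_def by (intro continuous_intros)
  have gint: "integrable lborel g" unfolding g_def[abs_def] using gauss_integrable[OF c] by simp
  have Dm: "(\<lambda>x. Dh x x) \<in> borel_measurable borel"
    unfolding Dh_def g_def by measurable
  define G where "G x = 3 * c * (norm x ^ 2 * exp (- c * norm x ^ 2))" for x :: 'a
  have Gint: "integrable lborel G"
    unfolding G_def[abs_def] by (intro integrable_mult_right gauss2_integrable c)
  have dom: "\<bar>g (x + s *\<^sub>R x) - g x\<bar> \<le> s * G x" if s: "0 < s" "s \<le> 1/2" for x :: 'a and s :: real
  proof -
    have "\<forall>t. 0 \<le> t \<and> t \<le> s \<longrightarrow> ((\<lambda>t. g (x + t *\<^sub>R x)) has_real_derivative Dh (x + t *\<^sub>R x) x) (at t)"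
      using ray_deriv[OF gd] by blast
    then obtain z where z: "0 < z" "z < s" "g (x + s *\<^sub>R x) - g (x + 0 *\<^sub>R x) = (s - 0) * Dh (x + z *\<^sub>R x) x"
      using MVT2[of 0 s "\<lambda>t. g (x + t *\<^sub>R x)" "\<lambda>t. Dh (x + t *\<^sub>R x) x"] s by auto
    have y: "x + z *\<^sub>R x = (1 + z) *\<^sub>R x" by (simp add: algebra_simps)
    have n: "norm (x + z *\<^sub>R x) = (1 + z) * norm x" using z by (simp add: y)
    have "\<bar>(x + z *\<^sub>R x) \<bullet> x\<bar> = (1 + z) * norm x ^ 2"
      using z by (simp add: y power2_norm_eq_inner)
    also have "\<dots> \<le> 3/2 * norm x ^ 2" using z s by (intro mult_right_mono) auto
    finally have ip: "\<bar>(x + z *\<^sub>R x) \<bullet> x\<bar> \<le> 3/2 * norm x ^ 2" .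
    have "norm x ^ 2 \<le> norm (x + z *\<^sub>R x) ^ 2"
      unfolding n using z by (intro power_mono) (auto simp: algebra_simps)
    then have ge: "g (x + z *\<^sub>R x) \<le> exp (- c * norm x ^ 2)"
      unfolding g_def using c by simp
    have "\<bar>g (x + s *\<^sub>R x) - g x\<bar> = s * \<bar>Dh (x + z *\<^sub>R x) x\<bar>" using z s by (simp add: abs_mult)
    also have "\<bar>Dh (x + z *\<^sub>R x) x\<bar> = 2 * c * \<bar>(x + z *\<^sub>R x) \<bullet> x\<bar> * g (x + z *\<^sub>R x)"
      using c by (simp add: Dh_def abs_mult g_def)
    also have "\<dots> \<le> 2 * c * (3/2 * norm x ^ 2) * exp (- c * norm x ^ 2)"
      using c ip ge by (intro mult_mono) (auto simp: g_def)
    also have "\<dots> = G x" by (simp add: G_def)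
    finally show ?thesis using s by (simp add: mult_left_mono)
  qed
  have S: "integral\<^sup>L lborel (\<lambda>x. Dh x x) = - real DIM('a) * integral\<^sup>L lborel g"
    by (rule scaling_deriv[OF gint gd Dm Gint dom])
  have Dhx: "Dh x x = -2 * c * (norm x ^ 2 * g x)" for x by (simp add: Dh_def power2_norm_eq_inner)
  have i2: "integrable lborel (\<lambda>x. norm x ^ 2 * g x)"
    unfolding g_def[abs_def] by (rule gauss2_integrable[OF c])
  have M: "integral\<^sup>L lborel (\<lambda>x. norm x ^ 2 * g x) = real DIM('a) / (2 * c) * integral\<^sup>L lborel g"
  proof -
    have "integral\<^sup>L lborel (\<lambda>x. Dh x x) = -2 * c * integral\<^sup>L lborel (\<lambda>x. norm x ^ 2 * g x)"
      unfolding Dhx by (rule integral_mult_right_zero)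
    then show ?thesis using S c by (simp add: field_simps)
  qed
  have gradg: "grad g x = (- 2 * c * g x) *\<^sub>R x" for x
  proof (rule grad_lin)
    show "(g has_derivative (\<lambda>v. ((- 2 * c * g x) *\<^sub>R x) \<bullet> v)) (at x)"
      using gd[of x] unfolding Dh_def by (simp add: mult_ac)
  qed
  have gradc: "continuous_on UNIV (grad g)"
    unfolding gradg[abs_def] by (intro continuous_intros gc)
  have L1: "L2sq c g = integral\<^sup>L lborel g"
    unfolding L2sq_eq[OF gc]
  proof (rule Bochner_Integration.integral_cong[OF refl])
    fix x :: 'a
    have "exp (c * norm x ^ 2) * exp (- c * norm x ^ 2) ^ 2 = exp (- c * norm x ^ 2)"
      by (simp add: power2_eq_square exp_add[symmetric] mult.assoc[symmetric])
    then show "exp (c * norm x ^ 2) * norm (g x) ^ 2 = g x" by (simp add: g_def)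
  qed
  have L2: "L2sq c (grad g) = 4 * c ^ 2 * integral\<^sup>L lborel (\<lambda>x. norm x ^ 2 * g x)"
  proof -
    have "L2sq c (grad g) = integral\<^sup>L lborel (\<lambda>x. 4 * c ^ 2 * (norm x ^ 2 * g x))"
      unfolding L2sq_eq[OF gradc]
    proof (rule Bochner_Integration.integral_cong[OF refl])
      fix x :: 'a
      have "exp (c * norm x ^ 2) * exp (- c * norm x ^ 2) ^ 2 = exp (- c * norm x ^ 2)"
        by (simp add: power2_eq_square exp_add[symmetric] mult.assoc[symmetric])
      then show "exp (c * norm x ^ 2) * norm (grad g x) ^ 2 = 4 * c ^ 2 * (norm x ^ 2 * g x)"
        by (simp add: gradg g_def power_mult_distrib abs_mult power2_eq_square mult_ac)
    qed
    then show ?thesis by simp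
  qed
  have pos: "integral\<^sup>L lborel g > 0"
    by (rule integral_pos[OF gc _ gint, of 0]) (simp_all add: g_def)
  show "L2sq c (grad (\<lambda>x::'a. exp (- c * norm x ^ 2)))
       = 2 * c * real DIM('a) * L2sq c (\<lambda>x::'a. exp (- c * norm x ^ 2))"
    using L1 L2 M c unfolding g_def[abs_def] by (simp add: power2_eq_square field_simps)
  show "L2sq c (\<lambda>x::'a. exp (- c * norm x ^ 2)) > 0"
    using L1 pos unfolding g_def[abs_def] by simp
qed



lemma Ck_cong: "(\<And>x. f x = g x) \<Longrightarrow> Ck k f \<Longrightarrow> Ck k g"
proof -
  assume "\<And>x. f x = g x" then have "f = g" by auto
  then show "Ck k f \<Longrightarrow> Ck k g" by simp
qed

lemma C0_inf_extract:
  fixes u :: "'a::euclidean_space \<Rightarrow> real"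
  assumes "C0_inf u"
  obtains D r where "\<And>x. (u has_derivative D x) (at x)"
    "\<And>e. continuous_on UNIV (\<lambda>x. D x e)" "\<And>x. r < norm x \<Longrightarrow> u x = 0"
proof -
  have C1: "Ck (Suc 0) u" using assms by (simp add: C0_inf_def C_inf_def)
  have d: "\<And>x. (u has_derivative frechet_derivative u (at x)) (at x)"
    using Ck_SucD(1)[OF C1] by blast
  have dc: "\<And>e. continuous_on UNIV (\<lambda>x. frechet_derivative u (at x) e)"
    using Ck_SucD(2)[OF C1] by simp
  have "bounded (closure {x. u x \<noteq> 0})"
    using assms by (simp add: C0_inf_def compact_imp_bounded)
  then obtain r where r: "\<And>x. x \<in> closure {x. u x \<noteq> 0} \<Longrightarrow> norm x \<le> r"
    unfolding bounded_iff by blast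
  have s: "r < norm x \<Longrightarrow> u x = 0" for x
    using r[of x] closure_subset[of "{x. u x \<noteq> 0}"] by fastforce
  show ?thesis by (rule that[of "\<lambda>x. frechet_derivative u (at x)" r, OF d dc s])
qed

lemma L2sq_pos:
  fixes u :: "'a::euclidean_space \<Rightarrow> real"
  assumes uc: "continuous_on UNIV u" and supp: "\<And>x. r < norm x \<Longrightarrow> u x = 0" and nz: "u \<noteq> (\<lambda>x. 0)"
  shows "L2sq c u > 0"
proof -
  obtain x0 where x0: "u x0 \<noteq> 0" using nz by auto
  have fc: "continuous_on UNIV (\<lambda>x. exp (c * norm x ^ 2) * norm (u x) ^ 2)"
    by (intro continuous_intros uc)
  show ?thesis unfolding L2sq_eq[OF uc]
    by (rule integral_pos[OF fc _ integrable_cont_compact[OF fc, of r], of x0]) (use supp x0 in auto)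
qed

definition uA :: "real \<Rightarrow> real \<Rightarrow> 'a::euclidean_space \<Rightarrow> real" where
  "uA c a x = exp (- c * norm x ^ 2) * psid 0 (2 - a * norm x ^ 2)"

lemma uA_C0_inf:
  assumes a: "a > 0"
  shows "C0_inf (uA c a :: 'a::euclidean_space \<Rightarrow> real)"
proof -
  have s1: "smooth1 (\<lambda>j t. (- c) ^ j * exp ((- c) * t + 0))"
    by (rule smooth1_affine[OF smooth1_exp])
  have s2: "smooth1 (\<lambda>j t. (- a) ^ j * psid j ((- a) * t + 2))"
    by (rule smooth1_affine[OF smooth1_psid])
  have "Ck k (uA c a :: 'a \<Rightarrow> real)" for k
  proof -
    have e: "Ck k (\<lambda>x::'a. exp (- c * norm x ^ 2))"
      by (rule Ck_cong[OF _ Ck_comp[OF s1 Ck_normsq]]) simp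
    have p: "Ck k (\<lambda>x::'a. psid 0 (2 - a * norm x ^ 2))"
      by (rule Ck_cong[OF _ Ck_comp[OF s2 Ck_normsq]]) simp
    show ?thesis unfolding uA_def[abs_def] by (rule Ck_mult[OF e p])
  qed
  then have "C_inf (uA c a :: 'a \<Rightarrow> real)" by (simp add: C_inf_def)
  moreover have "compact (closure {x::'a. uA c a x \<noteq> 0})"
  proof -
    have "{x::'a. uA c a x \<noteq> 0} \<subseteq> cball 0 (max 1 (2 / a))"
    proof
      fix x :: 'a assume x: "x \<in> {x. uA c a x \<noteq> 0}"
      show "x \<in> cball 0 (max 1 (2 / a))"
      proof (rule ccontr)
        assume "x \<notin> cball 0 (max 1 (2 / a))"
        then have n: "norm x > 1" "norm x > 2 / a" by auto
        have "norm x * 1 \<le> norm x * norm x" using n by (intro mult_left_mono) auto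
        then have "norm x \<le> norm x ^ 2" by (simp add: power2_eq_square)
        moreover have "2 < a * norm x" using n a by (simp add: field_simps)
        moreover have "a * norm x \<le> a * norm x ^ 2" using calculation(1) a by (intro mult_left_mono) auto
        ultimately have "2 < a * norm x ^ 2" by linarith
        then have "uA c a x = 0" by (simp add: uA_def psi_zero)
        then show False using x by simp
      qed
    qed
    then have "closure {x::'a. uA c a x \<noteq> 0} \<subseteq> cball 0 (max 1 (2 / a))"
      by (rule closure_minimal) simp
    then show ?thesis
      unfolding compact_eq_bounded_closed by (meson bounded_cball bounded_subset closed_closure)
  qed
  ultimately show ?thesis by (simp add: C0_inf_def)
qed

lemma uA_nz: "(uA c a :: 'a::euclidean_space \<Rightarrow> real) \<noteq> (\<lambda>x. 0)"
proof
  assume "(uA c a :: 'a \<Rightarrow> real) = (\<lambda>x. 0)"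
  then have "uA c a (0::'a) = 0" by simp
  then show False using psi_pos[of 2] by (simp add: uA_def)
qed



lemma psid_cont: "continuous_on UNIV (psid j)"
  using smooth1_psid unfolding smooth1_def
  by (meson DERIV_isCont continuous_at_imp_continuous_on)

lemma psid_supp:
  assumes a: "a > 0" and x: "max 1 (2 / a) < norm (x::'a::euclidean_space)"
  shows "psid j (2 - a * norm x ^ 2) = 0"
proof -
  have n: "norm x > 1" "norm x > 2 / a" using x by auto
  have "norm x * 1 \<le> norm x * norm x" using n by (intro mult_left_mono) auto
  then have "norm x \<le> norm x ^ 2" by (simp add: power2_eq_square)
  moreover have "2 < a * norm x" using n a by (simp add: field_simps)
  moreover have "a * norm x \<le> a * norm x ^ 2" using calculation(1) a by (intro mult_left_mono) auto
  ultimately have "2 < a * norm x ^ 2" by linarith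
  then show ?thesis by (simp add: psid_def)
qed

lemma D1_pos:
  fixes c :: real
  shows "integral\<^sup>L lborel (\<lambda>x::'a::euclidean_space. exp (- c * norm x ^ 2) * psid 0 (2 - norm x ^ 2) ^ 2) > 0"
    and "integrable lborel (\<lambda>x::'a::euclidean_space. exp (- c * norm x ^ 2) * psid 0 (2 - norm x ^ 2) ^ 2)"
proof -
  have fc: "continuous_on UNIV (\<lambda>x::'a. exp (- c * norm x ^ 2) * psid 0 (2 - norm x ^ 2) ^ 2)"
    by (intro continuous_intros continuous_on_compose2[OF psid_cont]) auto
  have supp: "max 1 (2 / 1) < norm x \<Longrightarrow> exp (- c * norm x ^ 2) * psid 0 (2 - norm x ^ 2) ^ 2 = 0" for x :: 'a
    using psid_supp[of 1 x 0] by simp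
  show int: "integrable lborel (\<lambda>x::'a. exp (- c * norm x ^ 2) * psid 0 (2 - norm x ^ 2) ^ 2)"
    by (rule integrable_cont_compact[OF fc supp])
  show "integral\<^sup>L lborel (\<lambda>x::'a. exp (- c * norm x ^ 2) * psid 0 (2 - norm x ^ 2) ^ 2) > 0"
    by (rule integral_pos[OF fc _ int, of 0]) (use psi_pos[of 2] in \<open>auto simp: psi_nonneg\<close>)
qed

lemma uA_ratio:
  fixes c a :: real
  assumes c: "c > 0" and a: "a > 0" "a \<le> 1"
  shows "L2sq c (grad (uA c a :: 'a::euclidean_space \<Rightarrow> real)) / L2sq c (uA c a :: 'a \<Rightarrow> real)
     \<le> 2 * c * real DIM('a) + 128 * a * integral\<^sup>L lborel (\<lambda>x::'a. exp (- c * norm x ^ 2))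
        / integral\<^sup>L lborel (\<lambda>x::'a. exp (- c * norm x ^ 2) * psid 0 (2 - norm x ^ 2) ^ 2)"
proof -
  define u where "u = (uA c a :: 'a \<Rightarrow> real)"
  define e where "e x = exp (- c * norm x ^ 2)" for x :: 'a
  define P0 where "P0 x = psid 0 (2 - a * norm x ^ 2)" for x :: 'a
  define P1 where "P1 x = psid (Suc 0) (2 - a * norm x ^ 2)" for x :: 'a
  define A where "A = integral\<^sup>L lborel e"
  define D1 where "D1 = integral\<^sup>L lborel (\<lambda>x::'a. exp (- c * norm x ^ 2) * psid 0 (2 - norm x ^ 2) ^ 2)"
  define r where "r = max 1 (2 / a)"
  have u_eq: "u x = e x * P0 x" for x by (simp add: u_def uA_def e_def P0_def)
  define D where "D x v = e x * ((0 - a * (2 * (x \<bullet> v))) * P1 x) + (- c * (2 * (x \<bullet> v)) * e x) * P0 x" for x v :: 'a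
  have ed: "(e has_derivative (\<lambda>v. - c * (2 * (x \<bullet> v)) * e x)) (at x)" for x
  proof -
    have "((\<lambda>x. - c * norm x ^ 2) has_derivative (\<lambda>v. - c * (2 * (x \<bullet> v)))) (at x)"
      by (rule has_derivative_mult_right[OF normsq_deriv])
    from DERIV_compose_FDERIV[OF DERIV_exp this] show ?thesis
      unfolding e_def[abs_def] by (simp add: mult_ac)
  qed
  have pd: "(P0 has_derivative (\<lambda>v. (0 - a * (2 * (x \<bullet> v))) * P1 x)) (at x)" for x
  proof -
    have i: "((\<lambda>x. 2 - a * norm x ^ 2) has_derivative (\<lambda>v. 0 - a * (2 * (x \<bullet> v)))) (at x)"
      by (rule has_derivative_diff[OF has_derivative_const has_derivative_mult_right[OF normsq_deriv]])
    have "(psid 0 has_real_derivative psid (Suc 0) (2 - a * norm x ^ 2)) (at (2 - a * norm x ^ 2))"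
      using smooth1_psid by (simp add: smooth1_def)
    from DERIV_compose_FDERIV[OF this i] show ?thesis
      unfolding P0_def[abs_def] P1_def by simp
  qed
  have ud: "(u has_derivative D x) (at x)" for x
  proof -
    have "((\<lambda>x. e x * P0 x) has_derivative D x) (at x)"
      unfolding D_def by (rule has_derivative_mult[OF ed pd])
    moreover have "u = (\<lambda>x. e x * P0 x)" using u_eq by auto
    ultimately show ?thesis by simp
  qed
  have ec: "continuous_on UNIV e" unfolding e_def by (intro continuous_intros)
  have P0c: "continuous_on UNIV P0" unfolding P0_def
    by (intro continuous_intros continuous_on_compose2[OF psid_cont]) auto
  have P1c: "continuous_on UNIV P1" unfolding P1_def
    by (intro continuous_intros continuous_on_compose2[OF psid_cont]) auto
  have Dc: "continuous_on UNIV (\<lambda>x. D x e')" for e'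
    unfolding D_def by (intro continuous_intros ec P0c P1c)
  have P0s: "r < norm x \<Longrightarrow> P0 x = 0" for x using psid_supp[OF a(1)] by (simp add: P0_def r_def)
  have P1s: "r < norm x \<Longrightarrow> P1 x = 0" for x using psid_supp[OF a(1)] by (simp add: P1_def r_def)
  have supp: "r < norm x \<Longrightarrow> u x = 0" for x using P0s by (simp add: u_eq)
  have KI: "L2sq c (grad u) = 2 * c * real DIM('a) * L2sq c u
           + integral\<^sup>L lborel (\<lambda>x. exp (c * norm x ^ 2) * norm (grad u x + (2 * c * u x) *\<^sub>R x) ^ 2)"
    by (rule key_identity[of u D r]) (use ud Dc supp in auto)
  have gradu: "grad u x = (- 2 * a * e x * P1 x - 2 * c * e x * P0 x) *\<^sub>R x" for x
  proof (rule grad_lin)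
    have "D x = (\<lambda>v. ((- 2 * a * e x * P1 x - 2 * c * e x * P0 x) *\<^sub>R x) \<bullet> v)"
      by (rule ext) (simp add: D_def algebra_simps)
    then show "(u has_derivative (\<lambda>v. ((- 2 * a * e x * P1 x - 2 * c * e x * P0 x) *\<^sub>R x) \<bullet> v)) (at x)"
      using ud[of x] by simp
  qed
  have wee: "exp (c * norm x ^ 2) * (e x * e x) = e x" for x
    by (simp add: e_def exp_add[symmetric] mult.assoc[symmetric])
  define Ef where "Ef x = exp (c * norm x ^ 2) * norm (grad u x + (2 * c * u x) *\<^sub>R x) ^ 2" for x
  have Ef_eq: "Ef x = 4 * a ^ 2 * P1 x ^ 2 * norm x ^ 2 * e x" for x
  proof -
    have "grad u x + (2 * c * u x) *\<^sub>R x = (- 2 * a * e x * P1 x) *\<^sub>R x"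
      by (simp add: gradu u_eq algebra_simps)
    then have "Ef x = exp (c * norm x ^ 2) * ((2 * a * e x * P1 x) ^ 2 * norm x ^ 2)"
      by (simp add: Ef_def power_mult_distrib abs_mult)
    also have "\<dots> = 4 * a ^ 2 * P1 x ^ 2 * norm x ^ 2 * (exp (c * norm x ^ 2) * (e x * e x))"
      by (simp add: power2_eq_square mult_ac)
    finally show ?thesis by (simp add: wee)
  qed
  have Ef_bound: "Ef x \<le> 128 * a * e x" for x
  proof (cases "P1 x = 0")
    case True then show ?thesis using a by (simp add: Ef_eq e_def)
  next
    case False
    then have "2 - a * norm x ^ 2 > 0" unfolding P1_def psid_def by (auto split: if_splits)
    then have nx: "norm x ^ 2 \<le> 2 / a" using a by (simp add: field_simps)
    have p1: "P1 x ^ 2 \<le> 16"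
    proof -
      have "\<bar>P1 x\<bar> \<le> 4" unfolding P1_def by (rule psi1_bound)
      then have "\<bar>P1 x\<bar> ^ 2 \<le> 4 ^ 2" by (intro power_mono) auto
      then show ?thesis by simp
    qed
    have "Ef x = (4 * a ^ 2) * (P1 x ^ 2 * norm x ^ 2) * e x" by (simp add: Ef_eq mult_ac)
    also have "\<dots> \<le> (4 * a ^ 2) * (16 * (2 / a)) * e x"
      using a p1 nx by (intro mult_right_mono mult_left_mono mult_mono) (auto simp: e_def)
    also have "\<dots> = 128 * a * e x" using a by (simp add: power2_eq_square field_simps)
    finally show ?thesis .
  qed
  have Efc: "continuous_on UNIV Ef"
  proof -
    have "Ef = (\<lambda>x. 4 * a ^ 2 * P1 x ^ 2 * norm x ^ 2 * e x)" using Ef_eq by auto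
    moreover have "continuous_on UNIV (\<lambda>x. 4 * a ^ 2 * P1 x ^ 2 * norm x ^ 2 * e x)"
      by (intro continuous_intros P1c ec)
    ultimately show ?thesis by simp
  qed
  have Efi: "integrable lborel Ef"
    by (rule integrable_cont_compact[OF Efc, of r]) (simp add: Ef_eq P1s)
  have eint: "integrable lborel e" unfolding e_def[abs_def] using gauss_integrable[OF c] by simp
  have E_le: "integral\<^sup>L lborel Ef \<le> 128 * a * A"
  proof -
    have "integral\<^sup>L lborel Ef \<le> integral\<^sup>L lborel (\<lambda>x. 128 * a * e x)"
      by (rule integral_mono[OF Efi integrable_mult_right[OF eint] Ef_bound])
    then show ?thesis by (simp add: A_def)
  qed
  have E_ge: "integral\<^sup>L lborel Ef \<ge> 0"
    by (rule Bochner_Integration.integral_nonneg) (simp add: Ef_def)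
  have uc: "continuous_on UNIV u" unfolding u_eq[abs_def] by (intro continuous_intros ec P0c)
  have Lu: "L2sq c u = integral\<^sup>L lborel (\<lambda>x. e x * P0 x ^ 2)"
    unfolding L2sq_eq[OF uc]
  proof (rule Bochner_Integration.integral_cong[OF refl])
    fix x :: 'a
    show "exp (c * norm x ^ 2) * norm (u x) ^ 2 = e x * P0 x ^ 2"
      using wee[of x] by (simp add: u_eq power2_eq_square mult_ac)
  qed
  have D1i: "integrable lborel (\<lambda>x::'a. exp (- c * norm x ^ 2) * psid 0 (2 - norm x ^ 2) ^ 2)"
    by (rule D1_pos(2))
  have D1p: "D1 > 0" unfolding D1_def by (rule D1_pos(1))
  have Lui: "integrable lborel (\<lambda>x. e x * P0 x ^ 2)"
    by (rule integrable_cont_compact[of _ r]) (auto intro!: continuous_intros ec P0c simp: P0s)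
  have Lu_ge: "L2sq c u \<ge> D1"
  proof -
    have "D1 \<le> integral\<^sup>L lborel (\<lambda>x. e x * P0 x ^ 2)"
      unfolding D1_def
    proof (rule integral_mono[OF D1i Lui])
      fix x :: 'a
      have "a * norm x ^ 2 \<le> 1 * norm x ^ 2" using a by (intro mult_right_mono) auto
      then have "psid 0 (2 - norm x ^ 2) \<le> P0 x" unfolding P0_def by (intro psi_mono) auto
      then have "psid 0 (2 - norm x ^ 2) ^ 2 \<le> P0 x ^ 2" by (intro power_mono psi_nonneg)
      then show "exp (- c * norm x ^ 2) * psid 0 (2 - norm x ^ 2) ^ 2 \<le> e x * P0 x ^ 2"
        by (simp add: e_def)
    qed
    then show ?thesis using Lu by simp
  qed
  have Lpos: "L2sq c u > 0" using Lu_ge D1p by linarith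
  have "L2sq c (grad u) / L2sq c u = 2 * c * real DIM('a) + integral\<^sup>L lborel Ef / L2sq c u"
    using KI Lpos by (simp add: Ef_def[abs_def] field_simps)
  also have "integral\<^sup>L lborel Ef / L2sq c u \<le> integral\<^sup>L lborel Ef / D1"
    using E_ge D1p Lu_ge by (intro divide_left_mono) auto
  also have "\<dots> \<le> 128 * a * A / D1"
    using E_le D1p by (intro divide_right_mono) auto
  finally show ?thesis by (simp add: u_def A_def D1_def e_def[abs_def])
qed



theorem corollary5:
  fixes c :: real
  assumes "CARD('n::finite) \<ge> 2" and "c > 0"
  shows "Inf {L2sq c (grad u) / L2sq c u | u :: real^'n \<Rightarrow> real. C0_inf u \<and> u \<noteq> (\<lambda>x. 0)}
           = 2 * c * real CARD('n)
       \<and> 2 * c * real CARD('n)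
           = L2sq c (grad (\<lambda>x::real^'n. exp (- c * norm x ^ 2)))
             / L2sq c (\<lambda>x::real^'n. exp (- c * norm x ^ 2))"
proof
  have c: "c > 0" by fact
  have DIMn: "DIM(real^'n) = CARD('n)" by simp
  define S where "S = {L2sq c (grad u) / L2sq c u | u :: real^'n \<Rightarrow> real. C0_inf u \<and> u \<noteq> (\<lambda>x. 0)}"
  have mem: "L2sq c (grad (uA c a :: real^'n \<Rightarrow> real)) / L2sq c (uA c a :: real^'n \<Rightarrow> real) \<in> S" if "a > 0" for a
    unfolding S_def using uA_C0_inf[OF that] uA_nz by blast
  have ne: "S \<noteq> {}" using mem[of 1] by auto
  have lb: "2 * c * real CARD('n) \<le> x" if "x \<in> S" for x
  proof -
    from that obtain u :: "real^'n \<Rightarrow> real" where u: "C0_inf u" "u \<noteq> (\<lambda>x. 0)"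
      and x: "x = L2sq c (grad u) / L2sq c u" unfolding S_def by blast
    obtain D r where ud: "\<And>x. (u has_derivative D x) (at x)"
      and Dc: "\<And>e. continuous_on UNIV (\<lambda>x. D x e)" and supp: "\<And>x. r < norm x \<Longrightarrow> u x = 0"
      using C0_inf_extract[OF u(1)] by blast
    have "L2sq c (grad u) \<ge> 2 * c * real DIM(real^'n) * L2sq c u"
      by (rule lower_bound[of u D r]) (use ud Dc supp in auto)
    moreover have uc: "continuous_on UNIV u"
      using ud by (meson continuous_at_imp_continuous_on has_derivative_continuous)
    have "L2sq c u > 0" by (rule L2sq_pos[OF uc supp u(2)])
    ultimately show ?thesis unfolding x DIMn by (simp add: pos_le_divide_eq)
  qed
  have gb: "y \<le> 2 * c * real CARD('n)" if y: "\<And>x. x \<in> S \<Longrightarrow> y \<le> x" for y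
  proof (rule ccontr)
    assume "\<not> y \<le> 2 * c * real CARD('n)"
    then have eps: "y - 2 * c * real CARD('n) > 0" by simp
    define \<epsilon> where "\<epsilon> = y - 2 * c * real CARD('n)"
    define A where "A = integral\<^sup>L lborel (\<lambda>x::real^'n. exp (- c * norm x ^ 2))"
    define D1 where "D1 = integral\<^sup>L lborel (\<lambda>x::real^'n. exp (- c * norm x ^ 2) * psid 0 (2 - norm x ^ 2) ^ 2)"
    have A0: "A \<ge> 0" unfolding A_def by (rule Bochner_Integration.integral_nonneg) simp
    have D1p: "D1 > 0" unfolding D1_def by (rule D1_pos(1))
    define a where "a = min 1 (\<epsilon> * D1 / (256 * (A + 1)))"
    have e0: "\<epsilon> > 0" using eps by (simp add: \<epsilon>_def)
    have a: "a > 0" "a \<le> 1" using e0 D1p A0 by (auto simp: a_def)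
    have "128 * a * A / D1 \<le> 128 * (\<epsilon> * D1 / (256 * (A + 1))) * A / D1"
      using a A0 D1p by (intro divide_right_mono mult_right_mono) (auto simp: a_def)
    also have "\<dots> = \<epsilon> / 2 * (A / (A + 1))"
    proof -
      have "A * (D1 * 256) \<ge> 0" using D1p A0 by simp
      then have h: "A + 1 \<noteq> 0" "1 + A \<noteq> 0" "D1 \<noteq> 0" "D1 * 256 + A * (D1 * 256) \<noteq> 0"
        using D1p A0 by linarith+
      show ?thesis using h by (simp add: field_simps)
    qed
    also have "\<dots> \<le> \<epsilon> / 2 * 1" using A0 e0 by (intro mult_left_mono) auto
    finally have small: "128 * a * A / D1 < \<epsilon>" using e0 by simp
    have "L2sq c (grad (uA c a :: real^'n \<Rightarrow> real)) / L2sq c (uA c a :: real^'n \<Rightarrow> real)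
       \<le> 2 * c * real DIM(real^'n) + 128 * a * A / D1"
      unfolding A_def D1_def by (rule uA_ratio[OF c a])
    also have "\<dots> < y" using small by (simp add: \<epsilon>_def)
    finally show False using y[OF mem[OF a(1)]] by simp
  qed
  show "Inf {L2sq c (grad u) / L2sq c u | u :: real^'n \<Rightarrow> real. C0_inf u \<and> u \<noteq> (\<lambda>x. 0)}
           = 2 * c * real CARD('n)"
    unfolding S_def[symmetric] by (rule cInf_eq_non_empty[OF ne lb gb]) auto
  show "2 * c * real CARD('n)
           = L2sq c (grad (\<lambda>x::real^'n. exp (- c * norm x ^ 2)))
             / L2sq c (\<lambda>x::real^'n. exp (- c * norm x ^ 2))"
    using gauss_ratio[OF c, where 'a="real^'n"] by (simp add: field_simps)
qed


end
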